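(* Let $G=(V,E)$ be a finite connected simple graph with vertex-weight $m_0\colon V\to\mathbb{R}_{>0}$ and distance parameter $d\colon E\to\mathbb{R}_{>0}$. Then $$\delta(G,m_0,d)=\max\{1-\nu(G,m_0,d),\,0\}.$$
   Context: Let $M=\sum_{u\in V}m_0(u)$ and $\|\cdot\|$ the Euclidean norm on $\mathbb{R}^{|V|}$. For $\varphi\colon V\to\mathbb{R}^{|V|}$, $\mathrm{bar}(\varphi)=\frac1M\sum_u m_0(u)\varphi(u)$. Define $\delta(G,m_0,d)=\inf\|\mathrm{bar}(\varphi)\|^2$ over all $\varphi\colon V\to\mathbb{R}^{|V|}$ with $\sum_u m_0(u)\|\varphi(u)\|^2=M$ and $\|\varphi(u)-\varphi(v)\|\le d(uv)$ for all $uv\in E$. Define $\nu(G,m_0,d)=\sup\frac1M\sum_{u}m_0(u)\|\varphi(u)\|^2$ over all $\varphi\colon V\to\mathbb{R}^{|V|}$ with $\sum_u m_0(u)\varphi(u)=0$ and $\|\varphi(u)-\varphi(v)\|\le d(uv)$ for all $uv\in E$. *)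

theory Defs
  imports "HOL-Analysis.Analysis"
begin

text \<open>Graphs: vertex set is the whole finite type 'v (so R^|V| is real^'v);
  edges are two-element vertex sets.\<close>

definition simple_graph :: "'v set set \<Rightarrow> bool" where
  "simple_graph E \<longleftrightarrow> (\<forall>e\<in>E. card e = 2)"

definition graph_connected :: "('v::finite) set set \<Rightarrow> bool" where
  "graph_connected E \<longleftrightarrow> (\<forall>u v. (\<lambda>x y. {x, y} \<in> E)\<^sup>*\<^sup>* u v)"

definition total_mass :: "('v::finite \<Rightarrow> real) \<Rightarrow> real" where
  "total_mass m0 = (\<Sum>u\<in>UNIV. m0 u)"

definition bar :: "('v::finite \<Rightarrow> real) \<Rightarrow> ('v \<Rightarrow> real ^ 'v) \<Rightarrow> real ^ 'v" where
  "bar m0 \<phi> = (1 / total_mass m0) *\<^sub>R (\<Sum>u\<in>UNIV. m0 u *\<^sub>R \<phi> u)"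

definition lipschitz_embedding ::
  "('v::finite) set set \<Rightarrow> ('v set \<Rightarrow> real) \<Rightarrow> ('v \<Rightarrow> real ^ 'v) \<Rightarrow> bool" where
  "lipschitz_embedding E d \<phi> \<longleftrightarrow>
     (\<forall>u v. {u, v} \<in> E \<longrightarrow> norm (\<phi> u - \<phi> v) \<le> d {u, v})"

definition delta :: "('v::finite) set set \<Rightarrow> ('v \<Rightarrow> real) \<Rightarrow> ('v set \<Rightarrow> real) \<Rightarrow> real" where
  "delta E m0 d = Inf {(norm (bar m0 \<phi>))\<^sup>2 | \<phi>.
      (\<Sum>u\<in>UNIV. m0 u * (norm (\<phi> u))\<^sup>2) = total_mass m0 \<and> lipschitz_embedding E d \<phi>}"

definition nu :: "('v::finite) set set \<Rightarrow> ('v \<Rightarrow> real) \<Rightarrow> ('v set \<Rightarrow> real) \<Rightarrow> real" where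
  "nu E m0 d = Sup {(1 / total_mass m0) * (\<Sum>u\<in>UNIV. m0 u * (norm (\<phi> u))\<^sup>2) | \<phi>.
      (\<Sum>u\<in>UNIV. m0 u *\<^sub>R \<phi> u) = 0 \<and> lipschitz_embedding E d \<phi>}"

end

theory Submission
  imports Defs
begin

lemma relpow_bound:
  fixes \<psi> :: "'v::finite \<Rightarrow> real ^ 'v"
  assumes lip: "lipschitz_embedding E d \<psi>" and dpos: "\<And>e. e \<in> E \<Longrightarrow> d e > 0"
  shows "((\<lambda>x y. {x, y} \<in> E) ^^ n) u v \<Longrightarrow> norm (\<psi> u - \<psi> v) \<le> real n * (\<Sum>e\<in>E. d e)"
proof (induction n arbitrary: v)
  case 0 thus ?case by simp
next
  case (Suc n)
  then obtain w where w: "((\<lambda>x y. {x, y} \<in> E) ^^ n) u w" and e: "{w, v} \<in> E" by auto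
  have "d {w, v} \<le> (\<Sum>e\<in>E. d e)"
  proof (rule member_le_sum[OF e])
    fix x assume "x \<in> E - {{w, v}}" thus "0 \<le> d x" using dpos by (simp add: less_imp_le)
  qed simp
  moreover have "norm (\<psi> w - \<psi> v) \<le> d {w, v}" using lip e unfolding lipschitz_embedding_def by blast
  moreover have "norm (\<psi> u - \<psi> v) \<le> norm (\<psi> u - \<psi> w) + norm (\<psi> w - \<psi> v)"
    by (rule norm_diff_triangle_le[OF order_refl order_refl])
  ultimately show ?case using Suc.IH[OF w] by (simp add: algebra_simps)
qed

lemma decomp_sq:
  fixes b :: "real ^ 'v::finite" and \<psi> :: "'v \<Rightarrow> real ^ 'v"
  assumes "(\<Sum>u\<in>UNIV. m0 u *\<^sub>R \<psi> u) = 0"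
  shows "(\<Sum>u\<in>UNIV. m0 u * (norm (b + \<psi> u))\<^sup>2)
     = total_mass m0 * (norm b)\<^sup>2 + (\<Sum>u\<in>UNIV. m0 u * (norm (\<psi> u))\<^sup>2)"
proof -
  have "(\<Sum>u\<in>UNIV. m0 u * (norm (b + \<psi> u))\<^sup>2)
     = (\<Sum>u\<in>UNIV. m0 u * (norm b)\<^sup>2 + 2 * (b \<bullet> (m0 u *\<^sub>R \<psi> u)) + m0 u * (norm (\<psi> u))\<^sup>2)"
    by (rule sum.cong) (auto simp: power2_norm_eq_inner inner_add algebra_simps inner_commute)
  also have "\<dots> = total_mass m0 * (norm b)\<^sup>2 + 2 * (b \<bullet> (\<Sum>u\<in>UNIV. m0 u *\<^sub>R \<psi> u)) + (\<Sum>u\<in>UNIV. m0 u * (norm (\<psi> u))\<^sup>2)"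
    by (simp add: sum.distrib total_mass_def sum_distrib_left sum_distrib_right inner_sum_right)
  finally show ?thesis using assms by simp
qed

lemma center_bound:
  fixes \<psi> :: "'v::finite \<Rightarrow> real ^ 'v"
  assumes m0: "\<And>u. m0 u > 0" and c: "(\<Sum>u\<in>UNIV. m0 u *\<^sub>R \<psi> u) = 0"
    and D: "\<And>u v. norm (\<psi> u - \<psi> v) \<le> D"
  shows "norm (\<psi> u) \<le> D"
proof -
  have M: "total_mass m0 > 0" unfolding total_mass_def
    by (simp add: m0 sum_pos)
  have "total_mass m0 *\<^sub>R \<psi> u = (\<Sum>v\<in>UNIV. m0 v *\<^sub>R (\<psi> u - \<psi> v))"
    using c by (simp add: total_mass_def scaleR_sum_left sum_subtractf scaleR_diff_right)
  hence "total_mass m0 * norm (\<psi> u) = norm (\<Sum>v\<in>UNIV. m0 v *\<^sub>R (\<psi> u - \<psi> v))"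
    using M by (metis abs_of_pos norm_scaleR)
  also have "\<dots> \<le> (\<Sum>v\<in>UNIV. norm (m0 v *\<^sub>R (\<psi> u - \<psi> v)))" by (rule norm_sum)
  also have "\<dots> \<le> (\<Sum>v\<in>UNIV. m0 v * D)"
    by (rule sum_mono) (simp add: D m0 less_imp_le mult_left_mono abs_of_pos)
  also have "\<dots> = total_mass m0 * D" by (simp add: total_mass_def sum_distrib_right)
  finally show ?thesis using M by simp
qed

theorem proposition2p4:
  fixes E :: "('v::finite) set set" and m0 :: "'v \<Rightarrow> real" and d :: "'v set \<Rightarrow> real"
  assumes "simple_graph E" and conn: "graph_connected E"
    and m0: "\<And>u. m0 u > 0" and dpos: "\<And>e. e \<in> E \<Longrightarrow> d e > 0"
  shows "delta E m0 d = max (1 - nu E m0 d) 0"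
proof -
  define M where "M = total_mass m0"
  have M: "M > 0" unfolding total_mass_def M_def by (simp add: m0 sum_pos)
  define R where "R = (\<lambda>x y. {x, y} \<in> E)"
  define N where "N = (\<lambda>u v. SOME n. (R ^^ n) u v)"
  have N: "(R ^^ N u v) u v" for u v
    using conn unfolding graph_connected_def N_def R_def[symmetric] rtranclp_power
    by (metis someI_ex)
  define Dm where "Dm = (\<Sum>e\<in>E. d e)"
  have Dm: "Dm \<ge> 0" unfolding Dm_def by (rule sum_nonneg) (simp add: dpos less_imp_le)
  define D where "D = (\<Sum>u\<in>UNIV. \<Sum>v\<in>UNIV. real (N u v) * Dm)"
  have ND: "real (N u v) * Dm \<le> D" for u v
  proof -
    have "real (N u v) * Dm \<le> (\<Sum>v\<in>UNIV. real (N u v) * Dm)"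
      by (rule member_le_sum) (auto simp: Dm)
    also have "\<dots> \<le> D" unfolding D_def
      by (rule member_le_sum) (auto intro!: sum_nonneg simp: Dm)
    finally show ?thesis .
  qed
  define q where "q = (\<lambda>\<psi>::'v \<Rightarrow> real^'v. (1 / M) * (\<Sum>u\<in>UNIV. m0 u * (norm (\<psi> u))\<^sup>2))"
  define S where "S = {q \<psi> | \<psi>. (\<Sum>u\<in>UNIV. m0 u *\<^sub>R \<psi> u) = 0 \<and> lipschitz_embedding E d \<psi>}"
  have nu: "nu E m0 d = Sup S" unfolding nu_def S_def q_def M_def ..
  have Sge: "s \<ge> 0" if "s \<in> S" for s
    using that M unfolding S_def q_def by (auto intro!: divide_nonneg_pos sum_nonneg mult_nonneg_nonneg simp: m0 less_imp_le)
  have S0: "0 \<in> S" unfolding S_def q_def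
    by (rule CollectI, rule exI[of _ "\<lambda>_. 0"]) (simp add: lipschitz_embedding_def dpos less_imp_le)
  have Sbdd: "bdd_above S"
  proof (rule bdd_aboveI)
    fix s assume "s \<in> S"
    then obtain \<psi> where s: "s = q \<psi>" and c: "(\<Sum>u\<in>UNIV. m0 u *\<^sub>R \<psi> u) = 0"
      and l: "lipschitz_embedding E d \<psi>" unfolding S_def by blast
    have "norm (\<psi> u - \<psi> v) \<le> D" for u v
      using relpow_bound[OF l dpos N[of u v, unfolded R_def]] ND[of u v] Dm_def by simp
    hence b: "norm (\<psi> u) \<le> D" for u using center_bound[OF m0 c] by blast
    have "(\<Sum>u\<in>UNIV. m0 u * (norm (\<psi> u))\<^sup>2) \<le> (\<Sum>u\<in>UNIV. m0 u * D\<^sup>2)"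
      by (rule sum_mono) (simp add: m0 less_imp_le mult_left_mono power_mono b)
    also have "\<dots> = M * D\<^sup>2" by (simp add: M_def total_mass_def sum_distrib_right)
    finally show "s \<le> D\<^sup>2" using M unfolding s q_def by (simp add: field_simps)
  qed
  have Sdown: "t \<in> S" if "s \<in> S" "0 \<le> t" "t \<le> s" for s t
  proof -
    obtain \<psi> where s: "s = q \<psi>" and c: "(\<Sum>u\<in>UNIV. m0 u *\<^sub>R \<psi> u) = 0"
      and l: "lipschitz_embedding E d \<psi>" using \<open>s \<in> S\<close> unfolding S_def by blast
    show ?thesis
    proof (cases "s = 0")
      case True thus ?thesis using that S0 by simp
    next
      case False
      hence sp: "s > 0" using Sge that by force
      define k where "k = sqrt (t / s)"
      have k0: "0 \<le> k" and k1: "k \<le> 1" using that sp by (auto simp: k_def)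
      have kk: "k\<^sup>2 = t / s" using that sp by (simp add: k_def)
      have "q (\<lambda>u. k *\<^sub>R \<psi> u) = k\<^sup>2 * q \<psi>"
        by (simp add: q_def power_mult_distrib sum_distrib_left algebra_simps)
      hence qt: "q (\<lambda>u. k *\<^sub>R \<psi> u) = t" using kk s sp by simp
      have c': "(\<Sum>u\<in>UNIV. m0 u *\<^sub>R (k *\<^sub>R \<psi> u)) = 0"
        proof -
        have "(\<Sum>u\<in>UNIV. m0 u *\<^sub>R (k *\<^sub>R \<psi> u)) = k *\<^sub>R (\<Sum>u\<in>UNIV. m0 u *\<^sub>R \<psi> u)"
          by (simp add: scaleR_sum_right mult.commute)
        thus ?thesis using c by simp
      qed
      have l': "lipschitz_embedding E d (\<lambda>u. k *\<^sub>R \<psi> u)"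
        unfolding lipschitz_embedding_def
      proof (intro allI impI)
        fix u v assume e: "{u, v} \<in> E"
        have "norm (k *\<^sub>R \<psi> u - k *\<^sub>R \<psi> v) = k * norm (\<psi> u - \<psi> v)"
          using k0 by (simp add: scaleR_diff_right[symmetric])
        also have "\<dots> \<le> k * d {u, v}" using l e k0 unfolding lipschitz_embedding_def
          by (simp add: mult_left_mono)
        also have "\<dots> \<le> d {u, v}" using k1 dpos[OF e] by (simp add: mult_left_le_one_le)
        finally show "norm (k *\<^sub>R \<psi> u - k *\<^sub>R \<psi> v) \<le> d {u, v}" .
      qed
      show ?thesis unfolding S_def using qt c' l' by blast
    qed
  qed
  define T where "T = {(norm (bar m0 \<phi>))\<^sup>2 | \<phi>.
      (\<Sum>u\<in>UNIV. m0 u * (norm (\<phi> u))\<^sup>2) = total_mass m0 \<and> lipschitz_embedding E d \<phi>}"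
  have delta: "delta E m0 d = Inf T" unfolding delta_def T_def ..
  have T: "T = {1 - s | s. s \<in> S \<and> s \<le> 1}"
  proof (intro equalityI subsetI)
    fix x assume "x \<in> T"
    then obtain \<phi> where x: "x = (norm (bar m0 \<phi>))\<^sup>2"
      and n: "(\<Sum>u\<in>UNIV. m0 u * (norm (\<phi> u))\<^sup>2) = M" and l: "lipschitz_embedding E d \<phi>"
      unfolding T_def M_def by blast
    define b where "b = bar m0 \<phi>"
    define \<psi> where "\<psi> = (\<lambda>u. \<phi> u - b)"
    have Mb: "M *\<^sub>R b = (\<Sum>u\<in>UNIV. m0 u *\<^sub>R \<phi> u)"
      using M by (simp add: b_def bar_def M_def)
    have c: "(\<Sum>u\<in>UNIV. m0 u *\<^sub>R \<psi> u) = 0"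
      using Mb by (simp add: \<psi>_def scaleR_diff_right sum_subtractf scaleR_sum_left[symmetric] M_def total_mass_def)
    have l': "lipschitz_embedding E d \<psi>" using l by (simp add: lipschitz_embedding_def \<psi>_def)
    have "(\<Sum>u\<in>UNIV. m0 u * (norm (b + \<psi> u))\<^sup>2) = M * (norm b)\<^sup>2 + M * q \<psi>"
      using decomp_sq[OF c, of b] M by (simp add: M_def q_def)
    hence "M = M * (norm b)\<^sup>2 + M * q \<psi>" using n by (simp add: \<psi>_def)
    hence e: "(norm b)\<^sup>2 = 1 - q \<psi>" using M
      by (metis add_diff_cancel_right' mult.right_neutral mult_left_cancel less_irrefl right_diff_distrib)
    have "q \<psi> \<le> 1" using e by (metis diff_ge_0_iff_ge zero_le_power2)
    moreover have "q \<psi> \<in> S" unfolding S_def using c l' by blast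
    ultimately show "x \<in> {1 - s | s. s \<in> S \<and> s \<le> 1}" using e x b_def by blast
  next
    fix x assume "x \<in> {1 - s | s. s \<in> S \<and> s \<le> 1}"
    then obtain s where x: "x = 1 - s" and sS: "s \<in> S" and s1: "s \<le> 1" by blast
    obtain \<psi> where s: "s = q \<psi>" and c: "(\<Sum>u\<in>UNIV. m0 u *\<^sub>R \<psi> u) = 0"
      and l: "lipschitz_embedding E d \<psi>" using sS unfolding S_def by blast
    obtain i :: 'v where True by blast
    define b :: "real^'v" where "b = sqrt (1 - s) *\<^sub>R axis i 1"
    have nb: "(norm b)\<^sup>2 = 1 - s" using s1 by (simp add: b_def)
    define \<phi> where "\<phi> = (\<lambda>u. b + \<psi> u)"
    have "(\<Sum>u\<in>UNIV. m0 u *\<^sub>R \<phi> u) = M *\<^sub>R b"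
      using c by (simp add: \<phi>_def scaleR_add_right sum.distrib scaleR_sum_left[symmetric] M_def total_mass_def)
    hence bar: "bar m0 \<phi> = b" using M by (simp add: bar_def M_def[symmetric])
    have "(\<Sum>u\<in>UNIV. m0 u * (norm (\<phi> u))\<^sup>2) = M * (norm b)\<^sup>2 + M * q \<psi>"
      using decomp_sq[OF c, of b] M by (simp add: M_def q_def \<phi>_def)
    hence n: "(\<Sum>u\<in>UNIV. m0 u * (norm (\<phi> u))\<^sup>2) = M" using nb s by (simp add: algebra_simps)
    have l': "lipschitz_embedding E d \<phi>" using l by (simp add: lipschitz_embedding_def \<phi>_def)
    show "x \<in> T" unfolding T_def using n l' bar nb x M_def by force
  qed
  have "Inf T = max (1 - Sup S) 0"
  proof (rule cInf_eq_non_empty)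
    show "T \<noteq> {}" using S0 T by force
  next
    fix x assume "x \<in> T"
    then obtain s where "x = 1 - s" "s \<in> S" "s \<le> 1" using T by blast
    thus "max (1 - Sup S) 0 \<le> x" using cSup_upper[OF _ Sbdd] by force
  next
    fix y assume y: "\<And>x. x \<in> T \<Longrightarrow> y \<le> x"
    show "y \<le> max (1 - Sup S) 0"
    proof (cases "Sup S > 1")
      case True
      then obtain s where "s \<in> S" "1 < s" using less_cSup_iff[OF _ Sbdd] S0 by blast
      hence "1 \<in> S" using Sdown by force
      hence "0 \<in> T" using T by force
      thus ?thesis using y by force
    next
      case False
      have "Sup S \<le> 1 - y"
      proof (rule cSup_least)
        show "S \<noteq> {}" using S0 by blast
        fix s assume "s \<in> S"
        moreover have "s \<le> 1" using cSup_upper[OF \<open>s \<in> S\<close> Sbdd] False by linarith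
        ultimately have "1 - s \<in> T" using T by blast
        thus "s \<le> 1 - y" using y by force
      qed
      thus ?thesis by linarith
    qed
  qed
  thus ?thesis using delta nu by simp
qed

end
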